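(* Let $H$ be a graph with vertex set $[h]$ such that no triangle of $H$ contains the vertex $h$ (equivalently, $N_H(h)$ is an independent set in $H$). Let $C_H=\max\{1,8d_H(h)\}$. Let $0<\gamma\leq\frac12$ and let $n\geq \gamma^{-16h}$. Let $G$ be a graph and let $V_1,\dots,V_h\subseteq V(G)$ form a $(\gamma,\geq n)$-inflation of $H$. Then there exist $V_h^*\subseteq V_h$ and $V_i'\subseteq V_i$ for $i\in[h-1]$ such that: (1) $|V_h^*|\geq \frac{\log n}{8\log(1/\gamma)}$; (2) for every $j\in N_H(h)$, every vertex of $V_j'$ is adjacent in $G$ to every vertex of $V_h^*$; (3) $(V_1',\dots,V_{h-1}')$ forms a $(\gamma',\geq n')$-inflation of the graph $H\setminus\{h\}$ (on vertex set $[h-1]$), where $n'=\sqrt n$ and $\gamma'=\gamma^{C_H}$.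
   Context: $N_H(v)$ and $d_H(v)$ denote the neighborhood and degree of $v$ in $H$. Let $G$ be a graph, $H$ a graph with vertex set $[h]$, and $V_1,\dots,V_h$ pairwise disjoint subsets of $V(G)$. A canonical copy of $H$ in $(V_1,\dots,V_h)$ is a tuple $(v_1,\dots,v_h)$ with $v_i\in V_i$ for all $i$ such that $v_iv_j\in E(G)$ whenever $ij\in E(H)$. The tuple $(V_1,\dots,V_h)$ is a $\gamma$-inflation of $H$ if it contains at least $\gamma\prod_{i=1}^h|V_i|$ canonical copies of $H$; it is a $(\gamma,\geq n)$-inflation if moreover $|V_i|\geq n$ for all $i$. All logarithms are to base $2$. *)

theory Defs
  imports Complex_Main "HOL-Library.FuncSet"
begin

definition is_graph :: "('a \<Rightarrow> 'a \<Rightarrow> bool) \<Rightarrow> bool" where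
  "is_graph E \<longleftrightarrow> (\<forall>x y. E x y \<longrightarrow> E y x) \<and> (\<forall>x. \<not> E x x)"

definition graph_on :: "nat \<Rightarrow> (nat \<Rightarrow> nat \<Rightarrow> bool) \<Rightarrow> bool" where
  "graph_on h EH \<longleftrightarrow> is_graph EH \<and> (\<forall>i j. EH i j \<longrightarrow> i \<in> {1..h} \<and> j \<in> {1..h})"

definition nbhd :: "nat \<Rightarrow> (nat \<Rightarrow> nat \<Rightarrow> bool) \<Rightarrow> nat \<Rightarrow> nat set" where
  "nbhd h EH v = {j \<in> {1..h}. EH v j}"

definition deg :: "nat \<Rightarrow> (nat \<Rightarrow> nat \<Rightarrow> bool) \<Rightarrow> nat \<Rightarrow> nat" where
  "deg h EH v = card (nbhd h EH v)"

definition canonical_copies ::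
  "('a \<Rightarrow> 'a \<Rightarrow> bool) \<Rightarrow> (nat \<Rightarrow> nat \<Rightarrow> bool) \<Rightarrow> nat \<Rightarrow> (nat \<Rightarrow> 'a set) \<Rightarrow> (nat \<Rightarrow> 'a) set" where
  "canonical_copies EG EH h V =
     {v \<in> PiE {1..h} V. \<forall>i\<in>{1..h}. \<forall>j\<in>{1..h}. EH i j \<longrightarrow> EG (v i) (v j)}"

definition inflation ::
  "('a \<Rightarrow> 'a \<Rightarrow> bool) \<Rightarrow> (nat \<Rightarrow> nat \<Rightarrow> bool) \<Rightarrow> nat \<Rightarrow> (nat \<Rightarrow> 'a set) \<Rightarrow> real \<Rightarrow> bool" where
  "inflation EG EH h V \<gamma> \<longleftrightarrow>
     (\<forall>i\<in>{1..h}. finite (V i)) \<and>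
     (\<forall>i\<in>{1..h}. \<forall>j\<in>{1..h}. i \<noteq> j \<longrightarrow> V i \<inter> V j = {}) \<and>
     real (card (canonical_copies EG EH h V)) \<ge> \<gamma> * (\<Prod>i\<in>{1..h}. real (card (V i)))"

definition inflation_ge ::
  "('a \<Rightarrow> 'a \<Rightarrow> bool) \<Rightarrow> (nat \<Rightarrow> nat \<Rightarrow> bool) \<Rightarrow> nat \<Rightarrow> (nat \<Rightarrow> 'a set) \<Rightarrow> real \<Rightarrow> real \<Rightarrow> bool" where
  "inflation_ge EG EH h V \<gamma> n \<longleftrightarrow>
     inflation EG EH h V \<gamma> \<and> (\<forall>i\<in>{1..h}. real (card (V i)) \<ge> n)"

end

theory Submission
  imports Defs
begin


lemma pow_sum_lower:
  fixes x :: "'i \<Rightarrow> real" and c :: real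
  assumes "finite I" "\<forall>i\<in>I. 0 \<le> x i" "0 \<le> c" "c * card I \<le> sum x I"
  shows "card I * c ^ t \<le> (\<Sum>i\<in>I. x i ^ t)"
proof (cases "c = 0")
  case True
  then show ?thesis
  proof (cases "t = 0")
    case True then show ?thesis by simp
  next
    case False
    then show ?thesis using \<open>c = 0\<close> assms by (simp add: sum_nonneg power_0_left)
  qed
next
  case False
  then have cpos: "c > 0" using assms by simp
  have key: "c^t + c^t * t * (x i / c - 1) \<le> x i ^ t" if "i \<in> I" for i
  proof -
    have "-1 \<le> x i / c - 1" using assms that cpos by simp
    from Bernoulli_inequality[OF this, of t]
    have "1 + t * (x i / c - 1) \<le> (x i / c) ^ t" by simp
    then have "c^t * (1 + t * (x i / c - 1)) \<le> c^t * (x i / c) ^ t"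
      using cpos by (intro mult_left_mono) auto
    also have "\<dots> = x i ^ t" using cpos by (simp add: power_divide)
    finally show ?thesis by (simp add: algebra_simps)
  qed
  have "(\<Sum>i\<in>I. c^t + c^t * t * (x i / c - 1)) \<le> (\<Sum>i\<in>I. x i ^ t)"
    using key by (rule sum_mono)
  moreover have "(\<Sum>i\<in>I. c^t + c^t * t * (x i / c - 1)) = card I * c^t + c^t * t * (sum x I / c - card I)"
  proof -
    have "(\<Sum>i\<in>I. c^t + c^t * t * (x i / c - 1)) = card I * c^t + c^t * t * (\<Sum>i\<in>I. (x i / c - 1))"
      by (simp add: sum.distrib sum_distrib_left)
    moreover have "(\<Sum>i\<in>I. (x i / c - 1)) = sum x I / c - card I"
      by (simp add: sum_subtractf sum_divide_distrib)
    ultimately show ?thesis by simp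
  qed
  moreover have "sum x I / c - card I \<ge> 0" using assms cpos by (simp add: field_simps)
  moreover have "0 \<le> c^t * t * (sum x I / c - card I)"
    using \<open>sum x I / c - card I \<ge> 0\<close> cpos by simp
  ultimately show ?thesis by linarith
qed

lemma card_filter: "finite Y \<Longrightarrow> card {y\<in>Y. Q y} = (\<Sum>y\<in>Y. if Q y then 1 else (0::nat))"
  by (simp add: sum.If_cases Int_def conj_commute)

lemma drc_count:
  assumes "finite Y" "finite W" "\<forall>y\<in>Y. S y \<subseteq> W"
  shows "(\<Sum>ws\<in>PiE {..<t} (\<lambda>_. W). card {y\<in>Y. P y \<and> (\<forall>k<t. ws k \<in> S y)})
       = (\<Sum>y\<in>{y\<in>Y. P y}. card (S y) ^ t)"
proof -
  have fin: "finite (PiE {..<t} (\<lambda>_. W))" using assms by (simp add: finite_PiE)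
  have "(\<Sum>ws\<in>PiE {..<t} (\<lambda>_. W). card {y\<in>Y. P y \<and> (\<forall>k<t. ws k \<in> S y)})
      = (\<Sum>ws\<in>PiE {..<t} (\<lambda>_. W). \<Sum>y\<in>Y. if P y \<and> (\<forall>k<t. ws k \<in> S y) then 1 else 0)"
    using assms(1) by (simp add: card_filter)
  also have "\<dots> = (\<Sum>y\<in>Y. \<Sum>ws\<in>PiE {..<t} (\<lambda>_. W). if P y \<and> (\<forall>k<t. ws k \<in> S y) then 1 else 0)"
    by (rule sum.swap)
  also have "\<dots> = (\<Sum>y\<in>Y. if P y then card (S y) ^ t else 0)"
  proof (rule sum.cong[OF refl])
    fix y assume y: "y \<in> Y"
    have eq: "{ws \<in> PiE {..<t} (\<lambda>_. W). \<forall>k<t. ws k \<in> S y} = PiE {..<t} (\<lambda>_. S y)"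
      using assms(3) y by (auto simp: PiE_def Pi_def)
    have "(\<Sum>ws\<in>PiE {..<t} (\<lambda>_. W). if P y \<and> (\<forall>k<t. ws k \<in> S y) then 1 else 0)
        = (if P y then card {ws \<in> PiE {..<t} (\<lambda>_. W). \<forall>k<t. ws k \<in> S y} else (0::nat))"
      using card_filter[OF fin, of "\<lambda>ws. \<forall>k<t. ws k \<in> S y"] by (cases "P y") simp_all
    also have "\<dots> = (if P y then card (S y) ^ t else 0)"
      by (simp add: eq card_PiE)
    finally show "(\<Sum>ws\<in>PiE {..<t} (\<lambda>_. W). if P y \<and> (\<forall>k<t. ws k \<in> S y) then 1 else 0) = (if P y then card (S y) ^ t else 0)" .
  qed
  also have "\<dots> = (\<Sum>y\<in>{y\<in>Y. P y}. card (S y) ^ t)"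
    using assms(1) by (simp add: sum.inter_filter)
  finally show ?thesis .
qed




lemma pair_card:
  assumes "finite Z" "finite U" "a < t" "b < t" "a \<noteq> b"
  shows "card {ws \<in> PiE {..<t} (\<lambda>_. Z \<times> U). snd (ws a) = snd (ws b)} * card U \<le> (card Z * card U) ^ t"
proof -
  let ?E = "{ws \<in> PiE {..<t} (\<lambda>_. Z \<times> U). snd (ws a) = snd (ws b)}"
  let ?f = "\<lambda>ws. (ws(b := undefined), fst (ws b))"
  have inj: "inj_on ?f ?E"
  proof (rule inj_onI)
    fix x y assume x: "x \<in> ?E" and y: "y \<in> ?E" and eq: "?f x = ?f y"
    then have 1: "x(b := undefined) = y(b := undefined)" and 2: "fst (x b) = fst (y b)" by auto
    have "x a = y a" using 1 assms(5) by (metis fun_upd_other)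
    then have "snd (x b) = snd (y b)" using x y by auto
    with 2 have "x b = y b" by (simp add: prod_eq_iff)
    with 1 show "x = y" by (metis fun_upd_triv fun_upd_upd)
  qed
  have img: "?f ` ?E \<subseteq> PiE ({..<t} - {b}) (\<lambda>_. Z \<times> U) \<times> Z"
    using assms by (auto simp: PiE_def Pi_def extensional_def)
  have fin: "finite (PiE ({..<t} - {b}) (\<lambda>_. Z \<times> U) \<times> Z)"
    using assms by (simp add: finite_PiE)
  have "card ?E = card (?f ` ?E)" using inj by (simp add: card_image)
  also have "\<dots> \<le> card (PiE ({..<t} - {b}) (\<lambda>_. Z \<times> U) \<times> Z)"
    by (rule card_mono[OF fin img])
  also have "\<dots> = (card Z * card U) ^ (t - 1) * card Z"
    using assms by (simp add: card_PiE card_cartesian_product)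
  finally have "card ?E * card U \<le> (card Z * card U) ^ (t - 1) * card Z * card U" by simp
  also have "\<dots> = (card Z * card U) ^ t"
    using assms by (cases t) (auto simp: algebra_simps)
  finally show ?thesis .
qed

lemma noninj_card:
  assumes "finite Z" "finite U"
  shows "card {ws \<in> PiE {..<t} (\<lambda>_. Z \<times> U). \<not> inj_on (\<lambda>k. snd (ws k)) {..<t}} * card U
         \<le> t * t * (card Z * card U) ^ t"
proof -
  let ?E = "\<lambda>a b. {ws \<in> PiE {..<t} (\<lambda>_. Z \<times> U). snd (ws a) = snd (ws b)}"
  have sub: "{ws \<in> PiE {..<t} (\<lambda>_. Z \<times> U). \<not> inj_on (\<lambda>k. snd (ws k)) {..<t}}
      \<subseteq> (\<Union>a\<in>{..<t}. \<Union>b\<in>{..<t}-{a}. ?E a b)"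
    by (auto simp: inj_on_def)
  have finE: "finite (?E a b)" for a b using assms by (simp add: finite_PiE)
  have "card {ws \<in> PiE {..<t} (\<lambda>_. Z \<times> U). \<not> inj_on (\<lambda>k. snd (ws k)) {..<t}}
      \<le> card (\<Union>a\<in>{..<t}. \<Union>b\<in>{..<t}-{a}. ?E a b)"
    by (rule card_mono[OF _ sub]) (simp add: finE)
  also have "\<dots> \<le> (\<Sum>a\<in>{..<t}. card (\<Union>b\<in>{..<t}-{a}. ?E a b))" by (rule card_UN_le) simp
  also have "\<dots> \<le> (\<Sum>a\<in>{..<t}. \<Sum>b\<in>{..<t}-{a}. card (?E a b))"
    by (intro sum_mono card_UN_le) simp
  finally have A0: "card {ws \<in> PiE {..<t} (\<lambda>_. Z \<times> U). \<not> inj_on (\<lambda>k. snd (ws k)) {..<t}}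
      \<le> (\<Sum>a\<in>{..<t}. \<Sum>b\<in>{..<t}-{a}. card (?E a b))" .
  have A: "card {ws \<in> PiE {..<t} (\<lambda>_. Z \<times> U). \<not> inj_on (\<lambda>k. snd (ws k)) {..<t}} * card U
      \<le> (\<Sum>a\<in>{..<t}. \<Sum>b\<in>{..<t}-{a}. card (?E a b) * card U)"
    using mult_le_mono1[OF A0, of "card U"] by (simp add: sum_distrib_right)
  also have "\<dots> \<le> (\<Sum>a\<in>{..<t}. \<Sum>b\<in>{..<t}-{a}. (card Z * card U) ^ t)"
    by (intro sum_mono pair_card assms) auto
  also have "\<dots> \<le> (\<Sum>a\<in>{..<t}. t * (card Z * card U) ^ t)"
    by (intro sum_mono) (simp add: card_Diff_subset)
  also have "\<dots> = t * t * (card Z * card U) ^ t" by simp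
  finally show ?thesis .
qed




definition mrgH :: "nat set \<Rightarrow> nat \<Rightarrow> (nat \<Rightarrow> 'a) \<Rightarrow> (nat \<Rightarrow> 'a) \<times> 'a \<Rightarrow> nat \<Rightarrow> 'a" where
  "mrgH N h y w = (\<lambda>i. if i \<in> N then y i else if i = h then snd w else fst w i)"

definition mrg2 :: "nat set \<Rightarrow> (nat \<Rightarrow> 'a) \<Rightarrow> (nat \<Rightarrow> 'a) \<Rightarrow> nat \<Rightarrow> 'a" where
  "mrg2 N y z = (\<lambda>i. if i \<in> N then y i else z i)"

lemma cc_iff: "x \<in> canonical_copies EG EH h V \<longleftrightarrow>
   x \<in> PiE {1..h} V \<and> (\<forall>i\<in>{1..h}. \<forall>j\<in>{1..h}. EH i j \<longrightarrow> EG (x i) (x j))"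
  by (simp add: canonical_copies_def)

lemma C_le_sum:
  assumes "1 \<le> h" "N \<subseteq> {1..h-1}" "\<forall>i\<in>{1..h}. finite (V i)"
  shows "card (canonical_copies EG EH h V) \<le>
    (\<Sum>y\<in>PiE N V. card {w \<in> PiE ({1..h-1} - N) V \<times> V h. mrgH N h y w \<in> canonical_copies EG EH h V})"
proof -
  let ?C = "canonical_copies EG EH h V"
  let ?R = "{1..h-1} - N"
  let ?S = "\<lambda>y. {w \<in> PiE ?R V \<times> V h. mrgH N h y w \<in> ?C}"
  let ?f = "\<lambda>x. (restrict x N, (restrict x ?R, x h))"
  have hh: "{1..h-1} \<subseteq> {1..h}" by auto
  have Nsub: "N \<subseteq> {1..h}" "?R \<subseteq> {1..h}" using assms(2) hh by blast+
  have finVN: "\<forall>i\<in>N. finite (V i)" "\<forall>i\<in>?R. finite (V i)" using assms(3) Nsub by blast+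
  have bk: "mrgH N h (restrict x N) (restrict x ?R, x h) = x" if "x \<in> PiE {1..h} V" for x
  proof
    fix i show "mrgH N h (restrict x N) (restrict x ?R, x h) i = x i"
      using that assms(1,2) by (auto simp: mrgH_def PiE_def extensional_def)
  qed
  have inj: "inj_on ?f ?C"
  proof (rule inj_onI)
    fix x y assume x: "x \<in> ?C" and y: "y \<in> ?C" and e: "?f x = ?f y"
    have xP: "x \<in> PiE {1..h} V" using x unfolding cc_iff by (rule conjunct1)
    have yP: "y \<in> PiE {1..h} V" using y unfolding cc_iff by (rule conjunct1)
    have "x = mrgH N h (restrict x N) (restrict x ?R, x h)" using bk[OF xP] by simp
    also have "\<dots> = mrgH N h (restrict y N) (restrict y ?R, y h)" using e by simp
    also have "\<dots> = y" using bk[OF yP] .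
    finally show "x = y" .
  qed
  have img: "?f ` ?C \<subseteq> Sigma (PiE N V) ?S"
  proof
    fix p assume "p \<in> ?f ` ?C"
    then obtain x where x: "x \<in> ?C" and p: "p = ?f x" by auto
    have xP: "x \<in> PiE {1..h} V" using x unfolding cc_iff by (rule conjunct1)
    have "restrict x N \<in> PiE N V" unfolding restrict_PiE_iff using xP Nsub by (meson PiE_mem subsetD)
    moreover have "restrict x ?R \<in> PiE ?R V" unfolding restrict_PiE_iff using xP Nsub by (meson PiE_mem subsetD)
    moreover have "x h \<in> V h" using xP assms(1) by (simp add: PiE_mem)
    moreover have "mrgH N h (restrict x N) (restrict x ?R, x h) \<in> ?C" using bk[OF xP] x by simp
    ultimately show "p \<in> Sigma (PiE N V) ?S" using p by auto
  qed
  have finN: "finite N" using assms(2) finite_subset by blast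
  have finY: "finite (PiE N V)" using finVN finN by (intro finite_PiE) auto
  have finR: "finite (PiE ?R V \<times> V h)" using finVN assms(1,3)
    by (intro finite_cartesian_product finite_PiE) auto
  have finS: "\<forall>y\<in>PiE N V. finite (?S y)"
    using finR by auto
  have "card ?C = card (?f ` ?C)" using inj by (simp add: card_image)
  also have "\<dots> \<le> card (Sigma (PiE N V) ?S)"
    by (rule card_mono[OF _ img]) (use finY finS in auto)
  also have "\<dots> = (\<Sum>y\<in>PiE N V. card (?S y))" using finY finS by (simp)
  finally show ?thesis .
qed

lemma S_sub:
  assumes "1 \<le> h" "N \<subseteq> {1..h-1}" "y \<in> PiE N V"
  shows "{w \<in> PiE ({1..h-1} - N) V \<times> V h. mrgH N h y w \<in> canonical_copies EG EH h V}
     \<subseteq> {z \<in> PiE ({1..h-1} - N) V. mrg2 N y z \<in> canonical_copies EG EH (h-1) V} \<times> V h"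
proof
  fix w assume w: "w \<in> {w \<in> PiE ({1..h-1} - N) V \<times> V h. mrgH N h y w \<in> canonical_copies EG EH h V}"
  obtain z v where wz: "w = (z, v)" by fastforce
  have z: "z \<in> PiE ({1..h-1} - N) V" and v: "v \<in> V h" using w wz by auto
  have cp: "\<forall>i\<in>{1..h}. \<forall>j\<in>{1..h}. EH i j \<longrightarrow> EG (mrgH N h y w i) (mrgH N h y w j)"
    using w unfolding cc_iff by simp
  have eq: "mrg2 N y z i = mrgH N h y w i" if "i \<in> {1..h-1}" for i
    using that wz assms(1) by (auto simp: mrg2_def mrgH_def)
  have "mrg2 N y z \<in> PiE {1..h-1} V"
    using z assms(2,3) by (auto simp: mrg2_def PiE_def Pi_def extensional_def)
  moreover have "\<forall>i\<in>{1..h-1}. \<forall>j\<in>{1..h-1}. EH i j \<longrightarrow> EG (mrg2 N y z i) (mrg2 N y z j)"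
    using cp eq by auto
  ultimately show "w \<in> {z \<in> PiE ({1..h-1} - N) V. mrg2 N y z \<in> canonical_copies EG EH (h-1) V} \<times> V h"
    using wz z v cc_iff by blast
qed

lemma C'_ge_sum:
  assumes "N \<subseteq> {1..h-1}" "\<forall>i\<in>{1..h-1}. finite (V i)"
    and "V' = (\<lambda>i. if i \<in> N then Bj i else V i)" "\<forall>i\<in>N. Bj i \<subseteq> V i"
  shows "(\<Sum>y\<in>PiE N Bj. card {z \<in> PiE ({1..h-1} - N) V. mrg2 N y z \<in> canonical_copies EG EH (h-1) V})
     \<le> card (canonical_copies EG EH (h-1) V')"
proof -
  let ?R = "{1..h-1} - N"
  let ?A = "\<lambda>y. {z \<in> PiE ?R V. mrg2 N y z \<in> canonical_copies EG EH (h-1) V}"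
  let ?f = "\<lambda>p. mrg2 N (fst p) (snd p)"
  have finN: "finite N" using assms(1) finite_subset by blast
  have finBj: "\<forall>i\<in>N. finite (Bj i)" using assms(1,2,4) by (meson finite_subset subsetD)
  have finY: "finite (PiE N Bj)" using finBj finN
    by (intro finite_PiE) auto
  have finR: "finite (PiE ?R V)" using assms(2) by (intro finite_PiE) auto
  have finA: "\<forall>y\<in>PiE N Bj. finite (?A y)" using finR by auto
  have fin': "finite (canonical_copies EG EH (h-1) V')"
  proof -
    have "canonical_copies EG EH (h-1) V' \<subseteq> PiE {1..h-1} V'" unfolding canonical_copies_def by blast
    moreover have "finite (PiE {1..h-1} V')" using assms finBj
      by (intro finite_PiE) auto
    ultimately show ?thesis by (rule finite_subset)
  qed
  have inj: "inj_on ?f (Sigma (PiE N Bj) ?A)"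
  proof (rule inj_onI)
    fix p q assume p: "p \<in> Sigma (PiE N Bj) ?A" and q: "q \<in> Sigma (PiE N Bj) ?A" and e: "?f p = ?f q"
    have "fst p = fst q"
    proof
      fix i show "fst p i = fst q i"
        using p q fun_cong[OF e, of i] by (cases "i \<in> N") (auto simp: mrg2_def PiE_def extensional_def)
    qed
    moreover have "snd p = snd q"
    proof
      fix i show "snd p i = snd q i"
        using p q fun_cong[OF e, of i] by (cases "i \<in> N") (auto simp: mrg2_def PiE_def extensional_def)
    qed
    ultimately show "p = q" by (simp add: prod_eq_iff)
  qed
  have img: "?f ` Sigma (PiE N Bj) ?A \<subseteq> canonical_copies EG EH (h-1) V'"
  proof
    fix x assume "x \<in> ?f ` Sigma (PiE N Bj) ?A"
    then obtain y z where y: "y \<in> PiE N Bj" and z: "z \<in> ?A y" and x: "x = mrg2 N y z" by auto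
    have "x \<in> PiE {1..h-1} V'"
      using y z assms(1,3) unfolding x by (auto simp: mrg2_def PiE_def Pi_def extensional_def)
    moreover have "\<forall>i\<in>{1..h-1}. \<forall>j\<in>{1..h-1}. EH i j \<longrightarrow> EG (x i) (x j)"
      using z unfolding x by (simp add: cc_iff)
    ultimately show "x \<in> canonical_copies EG EH (h-1) V'" by (simp add: cc_iff)
  qed
  have "(\<Sum>y\<in>PiE N Bj. card (?A y)) = card (Sigma (PiE N Bj) ?A)" using finY finA by simp
  also have "\<dots> = card (?f ` Sigma (PiE N Bj) ?A)" using inj by (simp add: card_image)
  also have "\<dots> \<le> card (canonical_copies EG EH (h-1) V')" by (rule card_mono[OF fin' img])
  finally show ?thesis .
qed

lemma C_le_C':
  assumes "1 \<le> h" "\<forall>i\<in>{1..h}. finite (V i)"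
  shows "card (canonical_copies EG EH h V) \<le> card (canonical_copies EG EH (h-1) V) * card (V h)"
proof -
  let ?f = "\<lambda>x. (restrict x {1..h-1}, x h)"
  let ?C = "canonical_copies EG EH h V"
  let ?C' = "canonical_copies EG EH (h-1) V"
  have inj: "inj_on ?f ?C"
  proof (rule inj_onI)
    fix x y assume x: "x \<in> ?C" and y: "y \<in> ?C" and e: "?f x = ?f y"
    show "x = y"
    proof
      fix i
      show "x i = y i"
      proof (cases "i \<in> {1..h-1}")
        case True
        have "restrict x {1..h-1} i = restrict y {1..h-1} i" using e by simp
        then show ?thesis using True by simp
      next
        case False
        show ?thesis
        proof (cases "i = h")
          case True then show ?thesis using e by simp
        next
          case False
          with \<open>i \<notin> {1..h-1}\<close> assms(1) have ni: "i \<notin> {1..h}" by auto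
          have xP: "x \<in> PiE {1..h} V" using x unfolding cc_iff by (rule conjunct1)
          have yP: "y \<in> PiE {1..h} V" using y unfolding cc_iff by (rule conjunct1)
          show ?thesis using PiE_arb[OF xP ni] PiE_arb[OF yP ni] by simp
        qed
      qed
    qed
  qed
  have img: "?f ` ?C \<subseteq> ?C' \<times> V h"
  proof
    fix p assume "p \<in> ?f ` ?C"
    then obtain x where x: "x \<in> ?C" and p: "p = ?f x" by auto
    have sub: "{1..h-1} \<subseteq> {1..h}" by auto
    have xP: "x \<in> PiE {1..h} V" using x unfolding cc_iff by (rule conjunct1)
    have xE: "\<forall>i\<in>{1..h}. \<forall>j\<in>{1..h}. EH i j \<longrightarrow> EG (x i) (x j)"
      using x unfolding cc_iff by (rule conjunct2)
    have "restrict x {1..h-1} \<in> PiE {1..h-1} V" unfolding restrict_PiE_iff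
      using xP sub by (meson PiE_mem subsetD)
    moreover have "\<forall>i\<in>{1..h-1}. \<forall>j\<in>{1..h-1}. EH i j \<longrightarrow> EG (restrict x {1..h-1} i) (restrict x {1..h-1} j)"
      using xE sub by auto
    ultimately have "restrict x {1..h-1} \<in> ?C'" by (simp add: cc_iff)
    moreover have "x h \<in> V h" using xP assms(1) by (simp add: PiE_mem)
    ultimately show "p \<in> ?C' \<times> V h" using p by auto
  qed
  have fin: "finite (?C' \<times> V h)"
  proof -
    have "?C' \<subseteq> PiE {1..h-1} V" unfolding canonical_copies_def by blast
    moreover have "finite (PiE {1..h-1} V)" using assms by (intro finite_PiE) force+
    moreover have "finite (V h)" using assms by auto
    ultimately have "finite ?C'" by (meson finite_subset)
    then show ?thesis using \<open>finite (V h)\<close> by (rule finite_cartesian_product)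
  qed
  have "card ?C = card (?f ` ?C)" using inj by (simp add: card_image)
  also have "\<dots> \<le> card (?C' \<times> V h)" by (rule card_mono[OF fin img])
  finally show ?thesis by (simp add: card_cartesian_product)
qed




lemma log2_le_2x: "0 < (y::real) \<Longrightarrow> log 2 y \<le> 2 * y"
proof -
  assume y: "0 < y"
  have "ln (1/2::real) \<le> 1/2 - 1" by (rule ln_le_minus_one) simp
  then have ln2: "1/2 \<le> ln (2::real)" by (simp add: ln_div)
  show ?thesis
  proof (cases "ln y \<ge> 0")
    case True
    have "log 2 y = ln y / ln 2" by (simp add: log_def)
    also have "\<dots> \<le> ln y / (1/2)" using True ln2 by (intro divide_left_mono) auto
    also have "\<dots> \<le> 2 * y" using ln_less_self[OF y] by simp
    finally show ?thesis .
  next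
    case False
    have "log 2 y = ln y / ln 2" by (simp add: log_def)
    also have "\<dots> \<le> 0" using False ln2 by (intro divide_nonpos_pos) auto
    finally show ?thesis using y by linarith
  qed
qed

lemma numeric:
  fixes g m :: real and n h d t :: nat
  assumes g0: "0 < g" and g1: "g \<le> 1/2" and h2: "2 \<le> h" and d1: "1 \<le> d"
    and nb: "real n \<ge> g powr (- 16 * real h)" and mn: "real n \<le> m"
    and tdef: "t = nat \<lceil>log 2 (real n) / (8 * log 2 (1/g))\<rceil>"
  shows "1 / sqrt (real n) + real t * real t / m + 2 * (2 * g ^ (8*d)) ^ t < g ^ t"
proof -
  define x where "x = real n"
  define L where "L = log 2 (1/g)"
  have g2: "2 \<le> 1/g" using g0 g1 by (simp add: field_simps)
  have L1: "1 \<le> L"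
  proof -
    have "log 2 2 \<le> log 2 (1/g)" using g2 by (intro log_mono) auto
    then show ?thesis by (simp add: L_def)
  qed
  have Lg: "L = - log 2 g" using g0 by (simp add: L_def log_divide)
  have gpow: "g powr (-16*real h) = (1/g) powr (16 * real h)"
    using g0 by (simp add: powr_minus_divide powr_divide)
  have "(2::real) powr (16*real h) \<le> (1/g) powr (16*real h)"
    by (rule powr_mono2) (use g2 in auto)
  moreover have "(2::real) powr 32 \<le> 2 powr (16*real h)"
    by (rule powr_mono) (use h2 in auto)
  ultimately have xbig: "2 powr 32 \<le> x" using nb gpow by (simp add: x_def)
  have x0: "0 < x" using xbig powr_gt_zero[of 2 32] by linarith
  have x1: "1 \<le> x" using xbig ge_one_powr_ge_zero[of 2 32] by linarith
  have logx: "16 * real h * L \<le> log 2 x"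
  proof -
    have "log 2 (g powr (-16*real h)) \<le> log 2 x"
      using nb g0 x0 by (intro log_mono) (auto simp: x_def)
    moreover have "log 2 (g powr (-16*real h)) = -16 * real h * log 2 g" by (simp add: log_powr)
    ultimately show ?thesis using Lg by simp
  qed
  define b where "b = log 2 x / (8 * L)"
  have b4: "2 * real h \<le> b"
  proof -
    have "2 * real h * (8 * L) \<le> log 2 x" using logx by simp
    then show ?thesis unfolding b_def using L1 by (simp add: field_simps)
  qed
  have b0: "0 \<le> b" using b4 by simp
  have tdef': "t = nat \<lceil>b\<rceil>" using tdef by (simp add: b_def x_def L_def)
  have tb: "b \<le> real t" "real t < b + 1"
    using tdef' b0 ceiling_correct[of b] by simp_all
  have t1: "1 \<le> t" using tb b4 h2 by linarith
  have gb: "g powr b = x powr (-1/8)"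
  proof -
    have "g powr b = (2 powr (log 2 g)) powr b" using g0 by simp
    also have "\<dots> = 2 powr (log 2 g * b)" by (simp add: powr_powr)
    also have "log 2 g * b = log 2 x * (-1/8)" unfolding b_def Lg using L1 Lg by (simp add: field_simps)
    also have "2 powr (log 2 x * (-1/8)) = (2 powr (log 2 x)) powr (-1/8)" by (simp add: powr_powr)
    also have "\<dots> = x powr (-1/8)" using x0 by simp
    finally show ?thesis .
  qed
  have gx: "x powr (-1/32) \<le> g"
  proof -
    have hpos: "0 < 16 * real h" using h2 by simp
    have "((1/g) powr (16 * real h)) powr (1/(16*real h)) \<le> x powr (1/(16*real h))"
      using nb gpow by (intro powr_mono2) (auto simp: x_def)
    moreover have "((1/g) powr (16 * real h)) powr (1/(16*real h)) = 1/g"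
      using hpos g0 by (simp add: powr_powr)
    ultimately have "1/g \<le> x powr (1/(16*real h))" by simp
    then have "1 / x powr (1/(16*real h)) \<le> g" using g0 x0
      by (simp add: field_simps)
    moreover have "x powr (-1/32) \<le> x powr (-(1/(16*real h)))"
      using h2 x1 by (intro powr_mono) (auto simp: field_simps)
    ultimately show ?thesis by (simp add: powr_minus_divide)
  qed
  define P where "P = x powr (-5/32)"
  have P0: "0 < P" using x0 by (simp add: P_def)
  have gt: "P \<le> g ^ t"
  proof -
    have "g ^ t = g powr real t" using g0 by (simp add: powr_realpow)
    moreover have "g powr (b + 1) \<le> g powr real t"
      using tb g0 g1 by (intro powr_mono') auto
    moreover have "g powr (b + 1) = x powr (-1/8) * g" using gb g0 by (simp add: powr_add)
    moreover have "x powr (-1/8) * x powr (-1/32) \<le> x powr (-1/8) * g"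
      using gx by (intro mult_left_mono) auto
    moreover have "x powr (-1/8) * x powr (-1/32) = P"
      unfolding P_def by (simp add: powr_add[symmetric])
    ultimately show ?thesis by linarith
  qed
  have th: "2 * (2 * g ^ (8*d)) ^ t \<le> g ^ t / 32"
  proof -
    have "g ^ (8*d) \<le> g ^ 8" using g0 g1 d1 by (intro power_decreasing) auto
    moreover have "g ^ 7 \<le> (1/2) ^ 7" using g0 g1 by (intro power_mono) auto
    then have "g * g ^ 7 \<le> g * (1/2) ^ 7" using g0 by (intro mult_left_mono) auto
    moreover have "g ^ 8 = g * g ^ 7" using power_add[of g 1 7] by simp
    moreover have "g * (1/2::real)^7 = g/128" by (simp add: power_divide)
    ultimately have a: "2 * g ^ (8*d) \<le> g / 64" using \<open>g ^ (8*d) \<le> g ^ 8\<close> by linarith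
    have "(2 * g ^ (8*d)) ^ t \<le> (g / 64) ^ t" using a g0 by (intro power_mono) auto
    also have "\<dots> = g ^ t / 64 ^ t" by (simp add: power_divide)
    also have "\<dots> \<le> g ^ t / 64"
    proof -
      have "(64::real) \<le> 64 ^ t" using t1 by (simp add: self_le_power)
      then show ?thesis using g0 by (intro divide_left_mono) auto
    qed
    finally show ?thesis by simp
  qed
  have sq: "1 / sqrt x \<le> P / 2048"
  proof -
    have "1 / sqrt x = x powr (-1/2)" using x0 by (simp add: powr_minus_divide powr_half_sqrt)
    also have "\<dots> = P * x powr (-11/32)" unfolding P_def by (simp add: powr_add[symmetric])
    also have "\<dots> \<le> P * (2 powr 32) powr (-11/32)"
      using P0 xbig by (intro mult_left_mono powr_mono2') auto
    also have "((2::real) powr 32) powr (-11/32) = 1/2048"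
      by (subst powr_powr) (simp add: powr_minus_divide)
    finally show ?thesis by simp
  qed
  have tt: "real t * real t / m \<le> P / 2048"
  proof -
    have "16 * real h * 1 \<le> 16 * real h * L" using L1 by (intro mult_left_mono) auto
    moreover have "2 \<le> real h" using h2 by simp
    ultimately have l32: "32 \<le> log 2 x" using logx by linarith
    have "log 2 x = 8 * log 2 (x powr (1/8))" by (simp add: log_powr)
    also have "\<dots> \<le> 8 * (2 * x powr (1/8))" using log2_le_2x[of "x powr (1/8)"] x0 by simp
    finally have lx: "log 2 x \<le> 16 * x powr (1/8)" by simp
    have "b \<le> log 2 x / 8" unfolding b_def using L1 l32
      by (intro divide_left_mono) auto
    then have "real t \<le> 16 * x powr (1/8)" using tb lx l32 by linarith
    then have "real t * real t \<le> (16 * x powr (1/8)) * (16 * x powr (1/8))"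
      by (intro mult_mono) auto
    also have "\<dots> = 256 * x powr (1/4)" by (simp add: powr_add[symmetric])
    finally have t2: "real t * real t \<le> 256 * x powr (1/4)" .
    have "real t * real t / m \<le> real t * real t / x"
      using mn x0 by (intro divide_left_mono) (auto simp: x_def)
    also have "\<dots> \<le> 256 * x powr (1/4) / x" using t2 x0 by (intro divide_right_mono) auto
    also have "256 * x powr (1/4) / x = 256 * P * x powr (-19/32)"
    proof -
      have "x powr (1/4 - 1) = x powr (1/4) / x powr 1" by (rule powr_diff)
      then have "x powr (1/4) / x = x powr (-3/4)" using x0 by (simp add: powr_one)
      also have "\<dots> = x powr (-5/32) * x powr (-19/32)" by (simp add: powr_add[symmetric])
      finally show ?thesis unfolding P_def by simp
    qed
    also have "\<dots> \<le> 256 * P * (2 powr 32) powr (-19/32)"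
      using P0 xbig by (intro mult_left_mono powr_mono2') auto
    also have "((2::real) powr 32) powr (-19/32) = 1/524288"
      by (subst powr_powr) (simp add: powr_minus_divide)
    finally show ?thesis by simp
  qed
  have "1 / sqrt (real n) + real t * real t / m + 2 * (2 * g ^ (8*d)) ^ t \<le> P / 1024 + g ^ t / 32"
    using sq tt th unfolding x_def by linarith
  also have "\<dots> < g ^ t" using gt P0 by simp
  finally show ?thesis .
qed




definition valw :: "nat \<Rightarrow> (nat \<Rightarrow> 'a) \<times> 'a \<Rightarrow> nat \<Rightarrow> 'a" where
  "valw h w l = (if l = h then snd w else fst w l)"

lemma mrgH_val: "l \<notin> N \<Longrightarrow> mrgH N h y w l = valw h w l"
  by (simp add: mrgH_def valw_def)

lemma mrgH_N: "l \<in> N \<Longrightarrow> mrgH N h y w l = y l"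
  by (simp add: mrgH_def)

lemma box:
  assumes h1: "1 \<le> h" and EG: "is_graph EG" and EH: "graph_on h EH"
    and Nsub: "N \<subseteq> {1..h-1}" and indep: "\<forall>i\<in>N. \<forall>j\<in>N. \<not> EH i j"
    and y0: "y0 \<in> PiE N V" and c0: "\<forall>k<t. mrgH N h y0 (ws k) \<in> canonical_copies EG EH h V"
    and wsW: "\<forall>k<t. ws k \<in> PiE ({1..h-1} - N) V \<times> V h"
  shows "{y \<in> PiE N V. \<forall>k<t. mrgH N h y (ws k) \<in> canonical_copies EG EH h V}
     = PiE N (\<lambda>i. {u \<in> V i. \<forall>k<t. \<forall>l\<in>{1..h}-N. EH i l \<longrightarrow> EG u (valw h (ws k) l)})"
    (is "?L = PiE N ?B")
proof
  have hh: "{1..h-1} \<subseteq> {1..h}" by auto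
  have NH: "N \<subseteq> {1..h}" using Nsub hh by blast
  show "?L \<subseteq> PiE N ?B"
  proof
    fix y assume y: "y \<in> ?L"
    then have yP: "y \<in> PiE N V" and cp: "\<forall>k<t. mrgH N h y (ws k) \<in> canonical_copies EG EH h V" by auto
    have "y i \<in> ?B i" if i: "i \<in> N" for i
    proof -
      have "y i \<in> V i" using yP i by (rule PiE_mem)
      moreover have "EG (y i) (valw h (ws k) l)" if k: "k < t" and l: "l \<in> {1..h}-N" and e: "EH i l" for k l
      proof -
        have "\<forall>a\<in>{1..h}. \<forall>b\<in>{1..h}. EH a b \<longrightarrow> EG (mrgH N h y (ws k) a) (mrgH N h y (ws k) b)"
          using cp k unfolding cc_iff by blast
        then have "EG (mrgH N h y (ws k) i) (mrgH N h y (ws k) l)" using i l e NH by blast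
        then show ?thesis using i l by (simp add: mrgH_val mrgH_N)
      qed
      ultimately show ?thesis by blast
    qed
    moreover have "y \<in> extensional N" using yP by (simp add: PiE_iff)
    ultimately show "y \<in> PiE N ?B" by (simp add: PiE_iff)
  qed
  show "PiE N ?B \<subseteq> ?L"
  proof
    fix y assume y: "y \<in> PiE N ?B"
    have yV: "y \<in> PiE N V"
      using y by (auto simp: PiE_iff)
    have "mrgH N h y (ws k) \<in> canonical_copies EG EH h V" if k: "k < t" for k
    proof -
      obtain z v where w: "ws k = (z, v)" by fastforce
      have wk: "(z, v) \<in> PiE ({1..h-1} - N) V \<times> V h" using wsW k w by metis
      have z: "z \<in> PiE ({1..h-1} - N) V" using wk by (rule SigmaD1)
      have v: "v \<in> V h" using wk by (rule SigmaD2)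
      have P: "mrgH N h y (ws k) \<in> PiE {1..h} V"
      proof (unfold PiE_iff, intro conjI ballI)
        fix i assume i: "i \<in> {1..h}"
        show "mrgH N h y (ws k) i \<in> V i"
        proof (cases "i \<in> N")
          case True then show ?thesis using PiE_mem[OF yV True] by (simp add: mrgH_N)
        next
          case False
          show ?thesis
          proof (cases "i = h")
            case True then show ?thesis using False v w by (simp add: mrgH_def)
          next
            case False2: False
            then have "i \<in> {1..h-1} - N" using i False by auto
            then show ?thesis using False False2 PiE_mem[OF z, of i] w by (simp add: mrgH_def)
          qed
        qed
      next
        show "mrgH N h y (ws k) \<in> extensional {1..h}"
        unfolding extensional_def
        proof (intro CollectI allI impI)
          fix i assume i: "i \<notin> {1..h}"
          then have "i \<notin> N" "i \<noteq> h" "i \<notin> {1..h-1} - N" using NH h1 by auto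
          then show "mrgH N h y (ws k) i = undefined" using PiE_arb[OF z, of i] w by (simp add: mrgH_def)
        qed
      qed
      have E: "EG (mrgH N h y (ws k) a) (mrgH N h y (ws k) b)"
        if a: "a \<in> {1..h}" and b: "b \<in> {1..h}" and e: "EH a b" for a b
      proof (cases "a \<in> N")
        case aN: True
        show ?thesis
        proof (cases "b \<in> N")
          case True then show ?thesis using aN indep e by blast
        next
          case False
          have "y a \<in> ?B a" using y aN by (rule PiE_mem)
          then have "EG (y a) (valw h (ws k) b)" using k b False e by blast
          then show ?thesis using aN False by (simp add: mrgH_val mrgH_N)
        qed
      next
        case aN: False
        show ?thesis
        proof (cases "b \<in> N")
          case bN: True
          have eba: "EH b a" using e EH by (simp add: graph_on_def is_graph_def)
          have "y b \<in> ?B b" using y bN by (rule PiE_mem)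
          then have "EG (y b) (valw h (ws k) a)" using k a aN eba by blast
          then have "EG (valw h (ws k) a) (y b)" using EG by (simp add: is_graph_def)
          then show ?thesis using aN bN by (simp add: mrgH_val mrgH_N)
        next
          case bN: False
          have "\<forall>a\<in>{1..h}. \<forall>b\<in>{1..h}. EH a b \<longrightarrow> EG (mrgH N h y0 (ws k) a) (mrgH N h y0 (ws k) b)"
            using c0 k unfolding cc_iff by blast
          then have "EG (mrgH N h y0 (ws k) a) (mrgH N h y0 (ws k) b)" using a b e by blast
          then show ?thesis using aN bN by (simp add: mrgH_val)
        qed
      qed
      show ?thesis unfolding cc_iff using P E by blast
    qed
    then show "y \<in> ?L" using yV by blast
  qed
qed




lemma prod_bound:
  fixes a b :: "nat \<Rightarrow> real"
  assumes "finite N" "i \<in> N" "\<forall>j\<in>N. 0 \<le> b j \<and> b j \<le> a j" "\<forall>j\<in>N. 0 < a j" "0 \<le> c"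
    "c * prod a N < prod b N"
  shows "c * a i < b i"
proof (rule ccontr)
  assume "\<not> c * a i < b i"
  then have bi: "b i \<le> c * a i" by simp
  have Pa: "prod a N = a i * prod a (N - {i})" using assms(1,2) by (simp add: prod.remove)
  have Pb: "prod b N = b i * prod b (N - {i})" using assms(1,2) by (simp add: prod.remove)
  have le: "prod b (N - {i}) \<le> prod a (N - {i})" using assms(3) by (intro prod_mono) auto
  have nb: "0 \<le> prod b (N - {i})" using assms(3) by (intro prod_nonneg) auto
  have "prod b N \<le> c * a i * prod b (N - {i})" unfolding Pb using bi nb by (rule mult_right_mono)
  also have "\<dots> \<le> c * a i * prod a (N - {i})"
    using le assms(2,4,5) by (intro mult_left_mono) auto
  also have "\<dots> = c * prod a N" using Pa by simp
  finally show False using assms(6) by simp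
qed

lemma prod_split_h1_aux:
  fixes h :: nat and f :: "nat \<Rightarrow> 'b::comm_monoid_mult"
  assumes "N \<subseteq> {1..h-1}"
  shows "(\<Prod>i\<in>{1..h-1}. f i) = (\<Prod>i\<in>{1..h-1}-N. f i) * (\<Prod>i\<in>N. f i)"
proof -
  have "finite {1..h-1}" by simp
  from prod.subset_diff[OF assms this, of f] show ?thesis by simp
qed

lemma prod_split_h:
  fixes h :: nat and f :: "nat \<Rightarrow> 'b::comm_monoid_mult"
  assumes "1 \<le> h" "N \<subseteq> {1..h-1}"
  shows "(\<Prod>i\<in>{1..h}. f i) = (\<Prod>i\<in>N. f i) * (\<Prod>i\<in>{1..h-1}-N. f i) * f h"
proof -
  have e: "{1..h} = insert h {1..h-1}" using assms(1) by auto
  have "h \<notin> {1..h-1}" by auto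
  then have "(\<Prod>i\<in>{1..h}. f i) = f h * (\<Prod>i\<in>{1..h-1}. f i)" unfolding e by simp
  moreover have "(\<Prod>i\<in>{1..h-1}. f i) = (\<Prod>i\<in>{1..h-1}-N. f i) * (\<Prod>i\<in>N. f i)"
    using prod_split_h1_aux[OF assms(2), of f] by simp
  ultimately show ?thesis by (simp add: algebra_simps)
qed

lemma prod_split_h1:
  fixes h :: nat and f :: "nat \<Rightarrow> 'b::comm_monoid_mult"
  assumes "N \<subseteq> {1..h-1}"
  shows "(\<Prod>i\<in>{1..h-1}. f i) = (\<Prod>i\<in>N. f i) * (\<Prod>i\<in>{1..h-1}-N. f i)"
proof -
  have "finite {1..h-1}" by simp
  from prod.subset_diff[OF assms this, of f] show ?thesis by (simp add: mult.commute)
qed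

lemma L_ge1: "0 < (g::real) \<Longrightarrow> g \<le> 1/2 \<Longrightarrow> 1 \<le> log 2 (1/g)"
proof -
  assume "0 < g" "g \<le> 1/2"
  then have "2 \<le> 1/g" by (simp add: field_simps)
  then have "log 2 2 \<le> log 2 (1/g)" by (intro log_mono) auto
  then show ?thesis by simp
qed


theorem lemma3p2:
  fixes EH :: "nat \<Rightarrow> nat \<Rightarrow> bool" and h :: nat
    and EG :: "'a \<Rightarrow> 'a \<Rightarrow> bool" and V :: "nat \<Rightarrow> 'a set"
    and \<gamma> :: real and n :: nat
  assumes "h \<ge> 1"
    and "graph_on h EH"
    and "\<forall>i j. EH h i \<and> EH h j \<longrightarrow> \<not> EH i j"
    and "0 < \<gamma>" and "\<gamma> \<le> 1/2"
    and "real n \<ge> \<gamma> powr (- 16 * real h)"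
    and "is_graph EG"
    and "inflation_ge EG EH h V \<gamma> (real n)"
  shows "\<exists>Vs V'. Vs \<subseteq> V h \<and> (\<forall>i\<in>{1..h-1}. V' i \<subseteq> V i)
     \<and> real (card Vs) \<ge> log 2 (real n) / (8 * log 2 (1 / \<gamma>))
     \<and> (\<forall>j\<in>nbhd h EH h. \<forall>x\<in>V' j. \<forall>y\<in>Vs. EG x y)
     \<and> inflation_ge EG EH (h - 1) V' (\<gamma> ^ max 1 (8 * deg h EH h)) (sqrt (real n))"
proof -
  note h1 = assms(1) and gH = assms(2) and tri = assms(3) and g0 = assms(4) and g1 = assms(5)
    and nb = assms(6) and gG = assms(7) and infl = assms(8)
  have EHsym: "\<And>i j. EH i j \<Longrightarrow> EH j i" and EHirr: "\<And>i. \<not> EH i i"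
    and EHin: "\<And>i j. EH i j \<Longrightarrow> i \<in> {1..h} \<and> j \<in> {1..h}"
    using gH unfolding graph_on_def is_graph_def by blast+
  have finV: "\<forall>i\<in>{1..h}. finite (V i)"
    and disj: "\<forall>i\<in>{1..h}. \<forall>j\<in>{1..h}. i \<noteq> j \<longrightarrow> V i \<inter> V j = {}"
    and cntC: "real (card (canonical_copies EG EH h V)) \<ge> \<gamma> * (\<Prod>i\<in>{1..h}. real (card (V i)))"
    and sizes: "\<forall>i\<in>{1..h}. real (card (V i)) \<ge> real n"
    using infl unfolding inflation_ge_def inflation_def by blast+
  define N where "N = nbhd h EH h"
  have Nsub: "N \<subseteq> {1..h-1}"
  proof
    fix j assume "j \<in> N"
    then have "j \<in> {1..h}" "EH h j" unfolding N_def nbhd_def by auto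
    moreover have "j \<noteq> h" using \<open>EH h j\<close> EHirr by blast
    ultimately show "j \<in> {1..h-1}" by auto
  qed
  have "h \<notin> {1..h-1}" using h1 by auto
  then have hN: "h \<notin> N" using Nsub by blast
  have indep: "\<forall>i\<in>N. \<forall>j\<in>N. \<not> EH i j" using tri unfolding N_def nbhd_def by blast
  have finN: "finite N" using Nsub finite_subset by blast
  have degN: "deg h EH h = card N" unfolding deg_def N_def ..
  have hh: "{1..h-1} \<subseteq> {1..h}" by auto
  have n1: "1 \<le> real n"
  proof -
    have "\<gamma> powr (- 16 * real h) = (1/\<gamma>) powr (16 * real h)"
      using g0 by (simp add: powr_minus_divide powr_divide)
    moreover have "1 \<le> (1/\<gamma>) powr (16 * real h)"
      using g0 g1 by (intro ge_one_powr_ge_zero) (auto simp: field_simps)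
    ultimately show ?thesis using nb by linarith
  qed
  have "real n \<le> real n * real n" using mult_left_mono[of 1 "real n" "real n"] n1 by simp
  then have "sqrt (real n) \<le> sqrt (real n * real n)" by (rule real_sqrt_le_mono)
  then have sqn: "sqrt (real n) \<le> real n" by simp
  have L1: "1 \<le> log 2 (1/\<gamma>)" using L_ge1 g0 g1 by blast
  define m where "m = card (V h)"
  have mn: "real n \<le> real m" using sizes h1 unfolding m_def by auto
  have m0: "0 < m" using mn n1 by simp
  have cardpos: "\<forall>i\<in>{1..h}. 0 < card (V i)" using sizes n1
    by (metis less_numeral_extra(1) not_le of_nat_0_less_iff order_less_le_trans)
  show ?thesis
  proof (cases "N = {}")
    case True
    have gam: "\<gamma> ^ max 1 (8 * deg h EH h) = \<gamma>" using degN True by simp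
    have Cle: "card (canonical_copies EG EH h V) \<le> card (canonical_copies EG EH (h-1) V) * m"
      unfolding m_def by (rule C_le_C'[OF h1 finV])
    have prodh: "(\<Prod>i\<in>{1..h}. real (card (V i))) = (\<Prod>i\<in>{1..h-1}. real (card (V i))) * real m"
      using prod_split_h[OF h1, of "{}" "\<lambda>i. real (card (V i))"] unfolding m_def by simp
    have "\<gamma> * (\<Prod>i\<in>{1..h-1}. real (card (V i))) * real m
        \<le> real (card (canonical_copies EG EH (h-1) V)) * real m"
      using cntC Cle prodh by (smt (verit) of_nat_le_iff of_nat_mult mult.assoc)
    then have cop: "\<gamma> * (\<Prod>i\<in>{1..h-1}. real (card (V i))) \<le> real (card (canonical_copies EG EH (h-1) V))"
      using m0 by simp
    have lg0: "0 \<le> log 2 (real n)" using n1 by simp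
    have "log 2 (real n) / (8 * log 2 (1 / \<gamma>)) \<le> log 2 (real n) / 8"
      using L1 lg0 by (intro divide_left_mono) auto
    also have "\<dots> \<le> 2 * real n / 8" using log2_le_2x[of "real n"] n1 by simp
    also have "\<dots> \<le> real m" using mn n1 by simp
    finally have bnd: "log 2 (real n) / (8 * log 2 (1 / \<gamma>)) \<le> real (card (V h))" unfolding m_def .
    have infl': "inflation_ge EG EH (h - 1) V \<gamma> (sqrt (real n))"
      unfolding inflation_ge_def inflation_def
    proof (intro conjI)
      show "\<forall>i\<in>{1..h-1}. finite (V i)" using finV hh by blast
      show "\<forall>i\<in>{1..h-1}. \<forall>j\<in>{1..h-1}. i \<noteq> j \<longrightarrow> V i \<inter> V j = {}" using disj hh by blast
      show "\<gamma> * (\<Prod>i\<in>{1..h-1}. real (card (V i))) \<le> real (card (canonical_copies EG EH (h-1) V))"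
        by (rule cop)
      show "\<forall>i\<in>{1..h-1}. sqrt (real n) \<le> real (card (V i))" using sizes hh sqn by fastforce
    qed
    show ?thesis
    proof (intro exI[of _ "V h"] exI[of _ V] conjI)
      show "V h \<subseteq> V h" by simp
      show "\<forall>i\<in>{1..h-1}. V i \<subseteq> V i" by simp
      show "log 2 (real n) / (8 * log 2 (1 / \<gamma>)) \<le> real (card (V h))" by (rule bnd)
      show "\<forall>j\<in>nbhd h EH h. \<forall>x\<in>V j. \<forall>y\<in>V h. EG x y" using True unfolding N_def by simp
      show "inflation_ge EG EH (h - 1) V (\<gamma> ^ max 1 (8 * deg h EH h)) (sqrt (real n))"
        using infl' gam by simp
    qed
  next
    case False
    define d where "d = card N"
    have d1: "1 \<le> d" using False finN unfolding d_def by (simp add: Suc_le_eq card_gt_0_iff)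
    obtain j0 where j0: "j0 \<in> N" using False by blast
    have "j0 \<in> {1..h-1}" using j0 Nsub by blast
    then have h2: "2 \<le> h" by auto
    define R where "R = {1..h-1} - N"
    define Y where "Y = PiE N V"
    define Z where "Z = PiE R V"
    define W where "W = Z \<times> V h"
    define C where "C = canonical_copies EG EH h V"
    define C' where "C' = canonical_copies EG EH (h-1) V"
    define S where "S = (\<lambda>y. {w \<in> W. mrgH N h y w \<in> C})"
    define A where "A = (\<lambda>y. {z \<in> Z. mrg2 N y z \<in> C'})"
    define \<gamma>' where "\<gamma>' = \<gamma> ^ (8*d)"
    define \<theta> where "\<theta> = 2 * \<gamma>'"
    define bad where "bad = (\<lambda>y. real (card (A y)) < \<theta> * real (card Z))"
    define t where "t = nat \<lceil>log 2 (real n) / (8 * log 2 (1/\<gamma>))\<rceil>"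
    define Wt where "Wt = PiE {..<t} (\<lambda>_. W)"
    define Bs where "Bs = (\<lambda>ws. {y \<in> Y. True \<and> (\<forall>k<t. ws k \<in> S y)})"
    define bads where "bads = (\<lambda>ws. {y \<in> Y. bad y \<and> (\<forall>k<t. ws k \<in> S y)})"
    define \<epsilon> where "\<epsilon> = 1 / sqrt (real n)"
    define injw :: "(nat \<Rightarrow> (nat \<Rightarrow> 'a) \<times> 'a) \<Rightarrow> bool" where "injw = (\<lambda>ws. inj_on (\<lambda>k. snd (ws k)) {..<t})"
    have gam: "\<gamma> ^ max 1 (8 * deg h EH h) = \<gamma>'" using degN d1 unfolding \<gamma>'_def d_def by simp
    have RH: "R \<subseteq> {1..h}" "N \<subseteq> {1..h}" using Nsub hh unfolding R_def by blast+
    have finVN: "\<forall>i\<in>N. finite (V i)" "\<forall>i\<in>R. finite (V i)" using finV RH by blast+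
    have finR: "finite R" unfolding R_def by simp
    have finY: "finite Y" unfolding Y_def using finN finVN by (intro finite_PiE) auto
    have finZ: "finite Z" unfolding Z_def using finR finVN by (intro finite_PiE) auto
    have finVh: "finite (V h)" using finV h1 by auto
    have finW: "finite W" unfolding W_def using finZ finVh by simp
    have finWt: "finite Wt" unfolding Wt_def using finW by (intro finite_PiE) auto
    have cY: "card Y = (\<Prod>i\<in>N. card (V i))" unfolding Y_def using finN by (rule card_PiE)
    have cZ: "card Z = (\<Prod>i\<in>R. card (V i))" unfolding Z_def using finR by (rule card_PiE)
    have cW: "card W = card Z * m" unfolding W_def m_def by (simp add: card_cartesian_product)
    have cWt: "card Wt = card W ^ t" unfolding Wt_def by (simp add: card_PiE)
    have cYpos: "0 < card Y" unfolding cY using cardpos RH finN by (intro prod_pos) auto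
    have cZpos: "0 < card Z" unfolding cZ using cardpos RH finR by (intro prod_pos) auto
    have cWpos: "0 < card W" unfolding cW using cZpos m0 by simp
    have SW: "\<forall>y\<in>Y. S y \<subseteq> W" unfolding S_def by blast
    have sumB: "(\<Sum>ws\<in>Wt. card (Bs ws)) = (\<Sum>y\<in>Y. card (S y) ^ t)"
      using drc_count[OF finY finW SW, where t=t and P="\<lambda>_. True"] unfolding Wt_def Bs_def by simp
    have sumbad: "(\<Sum>ws\<in>Wt. card (bads ws)) = (\<Sum>y\<in>{y\<in>Y. bad y}. card (S y) ^ t)"
      using drc_count[OF finY finW SW, where t=t and P=bad] unfolding Wt_def bads_def by simp
    have SA: "card (S y) \<le> card (A y) * m" if y: "y \<in> Y" for y
    proof -
      have "S y \<subseteq> A y \<times> V h"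
        using S_sub[OF h1 Nsub, of y V EG EH] y unfolding S_def A_def W_def Z_def R_def C_def C'_def Y_def
        by simp
      moreover have "finite (A y \<times> V h)" using finZ finVh unfolding A_def by simp
      ultimately have "card (S y) \<le> card (A y \<times> V h)" by (rule card_mono[rotated])
      then show ?thesis unfolding m_def by (simp add: card_cartesian_product)
    qed
    have badb: "real (\<Sum>ws\<in>Wt. card (bads ws)) \<le> real (card Y) * (\<theta> * real (card W)) ^ t"
    proof -
      have each: "real (card (S y)) ^ t \<le> (\<theta> * real (card W)) ^ t" if y: "y \<in> {y\<in>Y. bad y}" for y
      proof -
        have "real (card (S y)) \<le> real (card (A y)) * real m" using SA y by (simp flip: of_nat_mult)
        also have "\<dots> \<le> \<theta> * real (card Z) * real m" using y m0 unfolding bad_def by simp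
        also have "\<dots> = \<theta> * real (card W)" unfolding cW by simp
        finally show ?thesis by (intro power_mono) auto
      qed
      have th0: "0 \<le> \<theta>" unfolding \<theta>_def \<gamma>'_def using g0 by simp
      have "real (\<Sum>ws\<in>Wt. card (bads ws)) = (\<Sum>y\<in>{y\<in>Y. bad y}. real (card (S y)) ^ t)"
        unfolding sumbad by simp
      also have "\<dots> \<le> (\<Sum>y\<in>{y\<in>Y. bad y}. (\<theta> * real (card W)) ^ t)" by (rule sum_mono) (rule each)
      also have "\<dots> = real (card {y\<in>Y. bad y}) * (\<theta> * real (card W)) ^ t" by simp
      also have "\<dots> \<le> real (card Y) * (\<theta> * real (card W)) ^ t"
        using finY th0 by (intro mult_right_mono) (auto intro: card_mono)
      finally show ?thesis .
    qed
    have prodh: "(\<Prod>i\<in>{1..h}. real (card (V i))) = real (card Y) * real (card Z) * real m"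
      using prod_split_h[OF h1 Nsub, of "\<lambda>i. real (card (V i))"] unfolding cY cZ m_def R_def by simp
    have Csum: "real (card C) \<le> (\<Sum>y\<in>Y. real (card (S y)))"
    proof -
      have "card C \<le> (\<Sum>y\<in>Y. card (S y))"
        using C_le_sum[OF h1 Nsub finV, of EG EH] unfolding C_def Y_def S_def W_def Z_def R_def by simp
      then show ?thesis by (metis of_nat_le_iff of_nat_sum)
    qed
    have lowc: "\<gamma> * real (card W) * real (card Y) \<le> (\<Sum>y\<in>Y. real (card (S y)))"
      using cntC prodh Csum unfolding C_def cW by (simp add: algebra_simps)
    have sumSt: "real (card Y) * (\<gamma> * real (card W)) ^ t \<le> (\<Sum>y\<in>Y. real (card (S y)) ^ t)"
      using pow_sum_lower[OF finY, of "\<lambda>y. real (card (S y))" "\<gamma> * real (card W)" t] lowc g0 by simp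
    have sumBr: "real (\<Sum>ws\<in>Wt. card (Bs ws)) = (\<Sum>y\<in>Y. real (card (S y)) ^ t)"
      unfolding sumB by simp
    define Inj where "Inj = {ws \<in> Wt. injw ws}"
    define Non where "Non = {ws \<in> Wt. \<not> injw ws}"
    have nonc: "card Non * m \<le> t * t * card W ^ t"
      using noninj_card[OF finZ finVh, of t] unfolding Non_def Wt_def W_def injw_def m_def
      by (simp add: card_cartesian_product)
    define F where "F = (\<lambda>ws. real (card (Bs ws)) - 2 * real (card (bads ws)) - real (card Y) * \<epsilon>)"
    have eps0: "0 \<le> \<epsilon>" unfolding \<epsilon>_def by simp
    have BsY: "card (Bs ws) \<le> card Y" for ws unfolding Bs_def using finY by (intro card_mono) auto
    have split: "(\<Sum>ws\<in>Wt. F ws) = (\<Sum>ws\<in>Inj. F ws) + (\<Sum>ws\<in>Non. F ws)"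
    proof -
      have "Wt = Inj \<union> Non" "Inj \<inter> Non = {}" unfolding Inj_def Non_def by auto
      moreover have "finite Inj" "finite Non" using finWt unfolding Inj_def Non_def by auto
      ultimately show ?thesis by (simp add: sum.union_disjoint)
    qed
    have sumAll: "(\<Sum>ws\<in>Wt. F ws) \<ge> real (card Y) * (\<gamma> * real (card W)) ^ t
        - 2 * (real (card Y) * (\<theta> * real (card W)) ^ t) - real (card W) ^ t * real (card Y) * \<epsilon>"
    proof -
      have "(\<Sum>ws\<in>Wt. F ws) = real (\<Sum>ws\<in>Wt. card (Bs ws)) - 2 * real (\<Sum>ws\<in>Wt. card (bads ws))
          - real (card Wt) * (real (card Y) * \<epsilon>)"
        unfolding F_def by (simp add: sum_subtractf sum_distrib_left)
      then show ?thesis using sumBr sumSt badb unfolding cWt by simp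
    qed
    have sumNon: "(\<Sum>ws\<in>Non. F ws) \<le> real (card Non) * real (card Y)"
    proof -
      have "(\<Sum>ws\<in>Non. F ws) \<le> (\<Sum>ws\<in>Non. real (card Y))"
      proof (rule sum_mono)
        fix ws show "F ws \<le> real (card Y)" unfolding F_def using BsY[of ws] eps0 cYpos
          by (smt (verit) mult_nonneg_nonneg of_nat_0_le_iff of_nat_le_iff)
      qed
      then show ?thesis by simp
    qed
    have num: "\<epsilon> + real t * real t / real m + 2 * (2 * \<gamma> ^ (8*d)) ^ t < \<gamma> ^ t"
      using numeric[OF g0 g1 h2 d1 nb, of "real m" t] mn unfolding \<epsilon>_def t_def by simp
    have nonr: "real (card Non) \<le> real t * real t * real (card W) ^ t / real m"
      using nonc m0 by (simp add: field_simps flip: of_nat_mult of_nat_power)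
    have posInj: "0 < (\<Sum>ws\<in>Inj. F ws)"
    proof -
      define K where "K = real (card Y) * real (card W) ^ t"
      have K0: "0 < K" unfolding K_def using cYpos cWpos by simp
      have "(\<Sum>ws\<in>Inj. F ws) \<ge> K * (\<gamma> ^ t - 2 * \<theta> ^ t - \<epsilon> - real t * real t / real m)"
      proof -
        have "(\<Sum>ws\<in>Inj. F ws) = (\<Sum>ws\<in>Wt. F ws) - (\<Sum>ws\<in>Non. F ws)" using split by simp
        moreover have "real (card Non) * real (card Y) \<le> K * (real t * real t / real m)"
        proof -
          have "real (card Y) * real (card Non) \<le> real (card Y) * (real t * real t * real (card W) ^ t / real m)"
            by (rule mult_left_mono[OF nonr]) simp
          moreover have "real (card Y) * (real t * real t * real (card W) ^ t / real m) = K * (real t * real t / real m)"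
            unfolding K_def by (simp add: field_simps)
          ultimately have "real (card Y) * real (card Non) \<le> K * (real t * real t / real m)"
            by (rule ord_le_eq_trans)
          then show ?thesis by (metis mult.commute)
        qed
        moreover have "K * (\<gamma> ^ t - 2 * \<theta> ^ t - \<epsilon> - real t * real t / real m)
           = real (card Y) * (\<gamma> * real (card W)) ^ t - 2 * (real (card Y) * (\<theta> * real (card W)) ^ t)
             - real (card W) ^ t * real (card Y) * \<epsilon> - K * (real t * real t / real m)"
          unfolding K_def by (simp add: power_mult_distrib algebra_simps)
        ultimately show ?thesis using sumAll sumNon by linarith
      qed
      moreover have "0 < \<gamma> ^ t - 2 * \<theta> ^ t - \<epsilon> - real t * real t / real m"
        using num unfolding \<theta>_def \<gamma>'_def by simp
      ultimately show ?thesis using K0 by (smt (verit) mult_pos_pos)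
    qed
    obtain ws where wsI: "ws \<in> Inj" and Fpos: "0 < F ws"
    proof (rule ccontr)
      assume "\<not> thesis"
      then have "\<forall>ws\<in>Inj. F ws \<le> 0" using that by force
      then have "(\<Sum>ws\<in>Inj. F ws) \<le> 0" by (intro sum_nonpos) auto
      then show False using posInj by simp
    qed
    have wsWt: "ws \<in> Wt" and injws: "injw ws" using wsI unfolding Inj_def by auto
    have wsk: "ws k \<in> W" if "k < t" for k
    proof -
      have "ws \<in> PiE {..<t} (\<lambda>_. W)" using wsWt unfolding Wt_def .
      moreover have "k \<in> {..<t}" using that by simp
      ultimately show ?thesis by (rule PiE_mem)
    qed
    have Fp: "2 * real (card (bads ws)) + real (card Y) * \<epsilon> < real (card (Bs ws))"
      using Fpos unfolding F_def by simp
    have epsY: "0 < real (card Y) * \<epsilon>" using cYpos n1 unfolding \<epsilon>_def by simp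
    have "0 < card (Bs ws)" using Fp epsY by linarith
    then obtain y0 where y0: "y0 \<in> Bs ws" by (metis card.empty ex_in_conv less_irrefl)
    have BsEq: "Bs ws = {y \<in> PiE N V. \<forall>k<t. mrgH N h y (ws k) \<in> canonical_copies EG EH h V}"
      unfolding Bs_def Y_def S_def C_def using wsk by auto
    define Bj where "Bj = (\<lambda>i. {u \<in> V i. \<forall>k<t. \<forall>l\<in>{1..h}-N. EH i l \<longrightarrow> EG u (valw h (ws k) l)})"
    have y0P: "y0 \<in> PiE N V" and c0: "\<forall>k<t. mrgH N h y0 (ws k) \<in> canonical_copies EG EH h V"
      using y0 unfolding BsEq by auto
    have wsW': "\<forall>k<t. ws k \<in> PiE ({1..h-1} - N) V \<times> V h" using wsk unfolding W_def Z_def R_def by blast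
    have box': "Bs ws = PiE N Bj"
      unfolding BsEq Bj_def by (rule box[OF h1 gG gH Nsub indep y0P c0 wsW'])
    define V' where "V' = (\<lambda>i. if i \<in> N then Bj i else V i)"
    define Vs where "Vs = (\<lambda>k. snd (ws k)) ` {..<t}"
    have BjV: "\<forall>i\<in>N. Bj i \<subseteq> V i" unfolding Bj_def by auto
    have V'V: "\<forall>i\<in>{1..h-1}. V' i \<subseteq> V i" unfolding V'_def using BjV by auto
    have finV1: "\<forall>i\<in>{1..h-1}. finite (V i)" using finV hh by blast
    have finBj: "\<forall>i\<in>N. finite (Bj i)" using BjV finVN by (meson finite_subset)
    have cBs: "card (Bs ws) = (\<Prod>i\<in>N. card (Bj i))" unfolding box' using finN by (rule card_PiE)
    have bigBj: "sqrt (real n) < real (card (Bj i))" if i: "i \<in> N" for i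
    proof -
      have "\<epsilon> * real (card (V i)) < real (card (Bj i))"
      proof (rule prod_bound[OF finN i, where a="\<lambda>i. real (card (V i))" and b="\<lambda>i. real (card (Bj i))"])
        show "\<forall>j\<in>N. 0 \<le> real (card (Bj j)) \<and> real (card (Bj j)) \<le> real (card (V j))"
          using BjV finVN by (simp add: card_mono)
        show "\<forall>j\<in>N. 0 < real (card (V j))" using cardpos RH by auto
        show "0 \<le> \<epsilon>" by (rule eps0)
        show "\<epsilon> * (\<Prod>i\<in>N. real (card (V i))) < (\<Prod>i\<in>N. real (card (Bj i)))"
          using Fp eps0 unfolding cBs cY by (simp add: algebra_simps)
      qed
      moreover have "\<epsilon> * real n \<le> \<epsilon> * real (card (V i))" using sizes RH i eps0
        by (intro mult_left_mono) auto
      moreover have "\<epsilon> * real n = sqrt (real n)" unfolding \<epsilon>_def using n1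
        by (metis div_by_1 divide_divide_eq_right real_div_sqrt zero_le_one order_trans of_nat_0_le_iff times_divide_eq_left mult.commute)
      ultimately show ?thesis by linarith
    qed
    have Aeq: "A = (\<lambda>y. {z \<in> PiE ({1..h-1} - N) V. mrg2 N y z \<in> canonical_copies EG EH (h-1) V})"
      unfolding A_def Z_def R_def C'_def ..
    have cop1: "(\<Sum>y\<in>Bs ws. card (A y)) \<le> card (canonical_copies EG EH (h-1) V')"
      unfolding box' Aeq by (rule C'_ge_sum[OF Nsub finV1 V'_def BjV])
    have finBs: "finite (Bs ws)" unfolding Bs_def using finY by simp
    have part: "card (Bs ws) = card (bads ws) + card {y \<in> Bs ws. \<not> bad y}"
    proof -
      have "Bs ws = bads ws \<union> {y \<in> Bs ws. \<not> bad y}" "bads ws \<inter> {y \<in> Bs ws. \<not> bad y} = {}"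
        unfolding Bs_def bads_def by auto
      moreover have "finite (bads ws)" unfolding bads_def using finY by simp
      ultimately show ?thesis using finBs by (metis card_Un_disjoint finite_Un)
    qed
    have cop2: "\<theta> * real (card Z) * real (card {y \<in> Bs ws. \<not> bad y}) \<le> (\<Sum>y\<in>Bs ws. real (card (A y)))"
    proof -
      have "(\<Sum>y\<in>{y \<in> Bs ws. \<not> bad y}. real (card (A y))) \<le> (\<Sum>y\<in>Bs ws. real (card (A y)))"
        using finBs by (intro sum_mono2) auto
      moreover have "(\<Sum>y\<in>{y \<in> Bs ws. \<not> bad y}. \<theta> * real (card Z)) \<le> (\<Sum>y\<in>{y \<in> Bs ws. \<not> bad y}. real (card (A y)))"
        by (rule sum_mono) (simp add: bad_def)
      ultimately show ?thesis by (simp add: algebra_simps)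
    qed
    have prodV': "(\<Prod>i\<in>{1..h-1}. real (card (V' i))) = real (card (Bs ws)) * real (card Z)"
    proof -
      have "(\<Prod>i\<in>{1..h-1}. real (card (V' i))) = (\<Prod>i\<in>N. real (card (V' i))) * (\<Prod>i\<in>R. real (card (V' i)))"
        unfolding R_def by (rule prod_split_h1[OF Nsub])
      moreover have "(\<Prod>i\<in>N. real (card (V' i))) = real (card (Bs ws))"
        unfolding cBs V'_def by simp
      moreover have "(\<Prod>i\<in>R. real (card (V' i))) = real (card Z)"
        unfolding cZ V'_def R_def by simp
      ultimately show ?thesis by simp
    qed
    have copies: "\<gamma>' * (\<Prod>i\<in>{1..h-1}. real (card (V' i))) \<le> real (card (canonical_copies EG EH (h-1) V'))"
    proof -
      have g'0: "0 \<le> \<gamma>'" unfolding \<gamma>'_def using g0 by simp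
      have half: "real (card (Bs ws)) \<le> 2 * real (card {y \<in> Bs ws. \<not> bad y})"
        using part Fp epsY by linarith
      have "\<gamma>' * (\<Prod>i\<in>{1..h-1}. real (card (V' i))) = \<gamma>' * real (card Z) * real (card (Bs ws))"
        unfolding prodV' by simp
      also have "\<dots> \<le> \<gamma>' * real (card Z) * (2 * real (card {y \<in> Bs ws. \<not> bad y}))"
        using half g'0 by (intro mult_left_mono) auto
      also have "\<dots> = \<theta> * real (card Z) * real (card {y \<in> Bs ws. \<not> bad y})" unfolding \<theta>_def by simp
      also have "\<dots> \<le> (\<Sum>y\<in>Bs ws. real (card (A y)))" by (rule cop2)
      also have "\<dots> \<le> real (card (canonical_copies EG EH (h-1) V'))"
        using cop1 by (metis of_nat_le_iff of_nat_sum)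
      finally show ?thesis .
    qed
    have infl': "inflation_ge EG EH (h - 1) V' \<gamma>' (sqrt (real n))"
      unfolding inflation_ge_def inflation_def
    proof (intro conjI)
      show "\<forall>i\<in>{1..h-1}. finite (V' i)" using V'V finV1 by (meson finite_subset)
      show "\<forall>i\<in>{1..h-1}. \<forall>j\<in>{1..h-1}. i \<noteq> j \<longrightarrow> V' i \<inter> V' j = {}"
        using V'V disj hh by blast
      show "\<gamma>' * (\<Prod>i\<in>{1..h-1}. real (card (V' i))) \<le> real (card (canonical_copies EG EH (h-1) V'))"
        by (rule copies)
      show "\<forall>i\<in>{1..h-1}. sqrt (real n) \<le> real (card (V' i))"
      proof
        fix i assume i: "i \<in> {1..h-1}"
        show "sqrt (real n) \<le> real (card (V' i))"
        proof (cases "i \<in> N")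
          case True then show ?thesis using bigBj[OF True] unfolding V'_def by simp
        next
          case False then show ?thesis using sizes i hh sqn unfolding V'_def by force
        qed
      qed
    qed
    have cVs: "card Vs = t" unfolding Vs_def using injws unfolding injw_def by (simp add: card_image)
    show ?thesis
    proof (intro exI[of _ Vs] exI[of _ V'] conjI)
      show "Vs \<subseteq> V h" unfolding Vs_def using wsk unfolding W_def by (auto simp: mem_Times_iff)
      show "\<forall>i\<in>{1..h-1}. V' i \<subseteq> V i" by (rule V'V)
      show "log 2 (real n) / (8 * log 2 (1 / \<gamma>)) \<le> real (card Vs)"
        unfolding cVs t_def by linarith
      show "\<forall>j\<in>nbhd h EH h. \<forall>x\<in>V' j. \<forall>y\<in>Vs. EG x y"
      proof (intro ballI)
        fix j x y assume j: "j \<in> nbhd h EH h" and x: "x \<in> V' j" and y: "y \<in> Vs"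
        have jN: "j \<in> N" using j unfolding N_def .
        have ejh: "EH j h" using jN EHsym unfolding N_def nbhd_def by blast
        obtain k where k: "k < t" and yk: "y = snd (ws k)" using y unfolding Vs_def by auto
        have "x \<in> Bj j" using x jN unfolding V'_def by simp
        then have "\<forall>l\<in>{1..h}-N. EH j l \<longrightarrow> EG x (valw h (ws k) l)" unfolding Bj_def using k by blast
        moreover have "h \<in> {1..h} - N" using h1 hN by auto
        ultimately have "EG x (valw h (ws k) h)" using ejh by blast
        then show "EG x y" unfolding yk valw_def by simp
      qed
      show "inflation_ge EG EH (h - 1) V' (\<gamma> ^ max 1 (8 * deg h EH h)) (sqrt (real n))"
        using infl' gam by simp
    qed
  qed
qed


end
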